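(* Let $S$ be a finite poset whose Hasse graph $\Gamma(S)$ is the path $A_n$. Then $S$ is either a chain or a wattle if and only if every connected component of the induced subgraph of $\Gamma(S)$ on $S^\times$ has an even number of vertices.
   Context: $\Gamma(S)$: vertices $S$, edge between $s,s'$ when one covers the other. $S^\times$ is the set of junction points of $S$: elements covering at least two elements of $S$ or covered by at least two elements of $S$. A wattle is a poset that is a disjoint union of chains $Z_1,\dots,Z_t$ ($t\ge2$, $|Z_i|\ge2$) where for $i=1,\dots,t-1$ the minimal element of $Z_i$ is less than the maximal element of $Z_{i+1}$, with no other comparabilities between elements of different chains. *)

theory Defs
  imports Main
begin

text \<open>A finite poset is represented as a finite subset S of a type with a partial order,
  carrying the induced order.\<close>

definition covers_in :: "'a::order set \<Rightarrow> 'a \<Rightarrow> 'a \<Rightarrow> bool" where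
  "covers_in S x y \<longleftrightarrow> x \<in> S \<and> y \<in> S \<and> x < y \<and> \<not> (\<exists>z\<in>S. x < z \<and> z < y)"

definition hasse_adj :: "'a::order set \<Rightarrow> 'a \<Rightarrow> 'a \<Rightarrow> bool" where
  "hasse_adj S x y \<longleftrightarrow> covers_in S x y \<or> covers_in S y x"

definition hasse_is_path :: "'a::order set \<Rightarrow> bool" where
  "hasse_is_path S \<longleftrightarrow> (\<exists>v. bij_betw v {0..<card S} S \<and>
      (\<forall>i<card S. \<forall>j<card S. hasse_adj S (v i) (v j) \<longleftrightarrow> (i = Suc j \<or> j = Suc i)))"

definition junctions :: "'a::order set \<Rightarrow> 'a set" where
  "junctions S = {s \<in> S. 2 \<le> card {x \<in> S. covers_in S x s} \<or> 2 \<le> card {y \<in> S. covers_in S s y}}"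

definition induced_components :: "'a::order set \<Rightarrow> 'a set \<Rightarrow> 'a set set" where
  "induced_components S J =
     (\<lambda>x. {y \<in> J. (\<lambda>a b. a \<in> J \<and> b \<in> J \<and> hasse_adj S a b)\<^sup>*\<^sup>* x y}) ` J"

definition is_chain_set :: "'a::order set \<Rightarrow> bool" where
  "is_chain_set Z \<longleftrightarrow> (\<forall>x\<in>Z. \<forall>y\<in>Z. x \<le> y \<or> y \<le> x)"

definition is_wattle :: "'a::order set \<Rightarrow> bool" where
  "is_wattle S \<longleftrightarrow> (\<exists>t Z. 2 \<le> t \<and>
      (\<forall>i<t. Z i \<subseteq> S \<and> is_chain_set (Z i) \<and> finite (Z i) \<and> 2 \<le> card (Z i)) \<and>
      (\<forall>i<t. \<forall>j<t. i \<noteq> j \<longrightarrow> Z i \<inter> Z j = {}) \<and>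
      (\<Union>i<t. Z i) = S \<and>
      (\<forall>i<t. \<forall>j<t. i \<noteq> j \<longrightarrow> (\<forall>x\<in>Z i. \<forall>y\<in>Z j.
          x < y \<longleftrightarrow> (j = Suc i \<and> (\<forall>z\<in>Z i. x \<le> z) \<and> (\<forall>z\<in>Z j. z \<le> y)))))"

end

theory Submission
  imports Defs
begin

lemma two_elems:
  assumes "finite A" "2 \<le> card A"
  shows "\<exists>a\<in>A. \<exists>b\<in>A. a \<noteq> b"
proof (rule ccontr)
  assume "\<not> ?thesis"
  then have "card A \<le> Suc 0" using card_le_Suc0_iff_eq[OF assms(1)] by blast
  then show False using assms(2) by simp
qed

definition upv :: "(nat \<Rightarrow> 'a::order) \<Rightarrow> nat \<Rightarrow> bool" where
  "upv v k \<longleftrightarrow> v k < v (Suc k)"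

definition Tset :: "(nat \<Rightarrow> 'a::order) \<Rightarrow> nat \<Rightarrow> nat set" where
  "Tset v n = {i. 0<i \<and> Suc i<n \<and> upv v (i-1) \<noteq> upv v i}"

definition cntv :: "(nat \<Rightarrow> 'a::order) \<Rightarrow> nat \<Rightarrow> nat" where
  "cntv v k = card {e. e<k \<and> upv v e}"

locale hpath =
  fixes S :: "'a::order set" and v :: "nat \<Rightarrow> 'a" and n :: nat
  assumes fin: "finite S" and bij: "bij_betw v {0..<n} S"
  and adj: "\<And>i j. i<n \<Longrightarrow> j<n \<Longrightarrow> hasse_adj S (v i) (v j) \<longleftrightarrow> (i = Suc j \<or> j = Suc i)"
begin

abbreviation up where "up \<equiv> upv v"
abbreviation T where "T \<equiv> Tset v n"
abbreviation cnt where "cnt \<equiv> cntv v"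
lemmas up_def = upv_def

lemma vS: "i<n \<Longrightarrow> v i \<in> S" using bij bij_betwE by fastforce
lemma vinj: "i<n \<Longrightarrow> j<n \<Longrightarrow> v i = v j \<Longrightarrow> i = j"
  using bij by (auto simp: bij_betw_def inj_on_def)
lemma vsurj: "s\<in>S \<Longrightarrow> \<exists>i<n. s = v i"
  using bij by (auto simp: bij_betw_def)

lemma edge: "Suc k < n \<Longrightarrow> covers_in S (v k) (v (Suc k)) \<or> covers_in S (v (Suc k)) (v k)"
  using adj[of k "Suc k"] by (auto simp: hasse_adj_def)

lemma up_cov: "Suc k<n \<Longrightarrow> up k \<Longrightarrow> covers_in S (v k) (v (Suc k))"
  using edge[of k] by (auto simp: up_def covers_in_def)

lemma down_cov: "Suc k<n \<Longrightarrow> \<not> up k \<Longrightarrow> covers_in S (v (Suc k)) (v k)"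
  using edge[of k] by (auto simp: up_def covers_in_def)

lemma down_lt: "Suc k<n \<Longrightarrow> \<not> up k \<Longrightarrow> v (Suc k) < v k"
  using down_cov by (auto simp: covers_in_def)

lemma up_run: "j<n \<Longrightarrow> i \<le> j \<Longrightarrow> (\<forall>k. i\<le>k \<and> k<j \<longrightarrow> up k) \<Longrightarrow> v i \<le> v j"
proof (induction j)
  case 0
  then show ?case by simp
next
  case (Suc j)
  show ?case
  proof (cases "i = Suc j")
    case False
    then have "v i \<le> v j" using Suc by auto
    moreover have "up j" using Suc False by auto
    ultimately show ?thesis unfolding up_def by simp
  qed simp
qed

lemma down_run: "j<n \<Longrightarrow> i \<le> j \<Longrightarrow> (\<forall>k. i\<le>k \<and> k<j \<longrightarrow> \<not> up k) \<Longrightarrow> v j \<le> v i"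
proof (induction j)
  case 0
  then show ?case by simp
next
  case (Suc j)
  show ?case
  proof (cases "i = Suc j")
    case False
    then have "v j \<le> v i" using Suc by auto
    moreover have "\<not> up j" using Suc False by auto
    ultimately show ?thesis using down_lt[of j] Suc(2) by simp
  qed simp
qed

lemma lt_run: "i<n \<Longrightarrow> j<n \<Longrightarrow> v i < v j \<Longrightarrow>
   (i<j \<and> (\<forall>k. i\<le>k \<and> k<j \<longrightarrow> up k)) \<or> (j<i \<and> (\<forall>k. j\<le>k \<and> k<i \<longrightarrow> \<not> up k))"
proof (induction "card {z\<in>S. v i < z \<and> z < v j}" arbitrary: i j rule: less_induct)
  case less
  show ?case
  proof (cases "\<exists>z\<in>S. v i < z \<and> z < v j")
    case False
    then have "covers_in S (v i) (v j)" using less vS by (auto simp: covers_in_def)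
    then have "hasse_adj S (v i) (v j)" by (simp add: hasse_adj_def)
    then have "i = Suc j \<or> j = Suc i" using adj less by blast
    then show ?thesis
    proof
      assume h: "i = Suc j"
      have "\<not> up j" using h less(4) by (auto simp: up_def)
      moreover have "\<forall>k. j\<le>k \<and> k<i \<longrightarrow> k = j" using h by auto
      ultimately show ?thesis using h by (metis le_antisym less_Suc_eq_le lessI)
    next
      assume h: "j = Suc i"
      have "up i" using h less(4) by (auto simp: up_def)
      moreover have "\<forall>k. i\<le>k \<and> k<j \<longrightarrow> k = i" using h by auto
      ultimately show ?thesis using h by (metis le_antisym less_Suc_eq_le lessI)
    qed
  next
    case True
    then obtain z where z: "z\<in>S" "v i < z" "z < v j" by blast
    obtain m where m: "m<n" "z = v m" using vsurj z by blast
    have c1: "card {w\<in>S. v i < w \<and> w < v m} < card {w\<in>S. v i < w \<and> w < v j}"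
      by (rule psubset_card_mono) (use fin z m in \<open>auto intro: less_trans\<close>)
    have c2: "card {w\<in>S. v m < w \<and> w < v j} < card {w\<in>S. v i < w \<and> w < v j}"
      by (rule psubset_card_mono) (use fin z m in \<open>auto intro: less_trans\<close>)
    note h1 = less.hyps[OF c1 less(2) m(1)]
    note h2 = less.hyps[OF c2 m(1) less(3)]
    from h1 z m have r1: "(i<m \<and> (\<forall>k. i\<le>k \<and> k<m \<longrightarrow> up k)) \<or> (m<i \<and> (\<forall>k. m\<le>k \<and> k<i \<longrightarrow> \<not> up k))" by simp
    from h2 z m have r2: "(m<j \<and> (\<forall>k. m\<le>k \<and> k<j \<longrightarrow> up k)) \<or> (j<m \<and> (\<forall>k. j\<le>k \<and> k<m \<longrightarrow> \<not> up k))" by simp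
    show ?thesis
    proof (cases "i < m")
      case im: True
      show ?thesis
      proof (cases "m < j")
        case True
        then show ?thesis using r1 r2 im by (metis le_less_trans less_asym not_le)
      next
        case False
        then have jm: "j<m" using r2 by auto
        have A: "\<forall>k. i\<le>k \<and> k<m \<longrightarrow> up k" using r1 im by auto
        have B: "\<forall>k. j\<le>k \<and> k<m \<longrightarrow> \<not> up k" using r2 jm by auto
        have "i \<le> m-1 \<and> m-1 < m" "j \<le> m-1" using im jm by linarith+
        then have "up (m-1)" "\<not> up (m-1)" using A B by blast+
        then show ?thesis by blast
      qed
    next
      case mi: False
      show ?thesis
      proof (cases "m < j")
        case True
        have mi': "m<i" using r1 mi by auto
        have A: "\<forall>k. m\<le>k \<and> k<i \<longrightarrow> \<not> up k" using r1 mi' by auto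
        have B: "\<forall>k. m\<le>k \<and> k<j \<longrightarrow> up k" using r2 True by auto
        have "up m" "\<not> up m" using A B mi' True by blast+
        then show ?thesis by blast
      next
        case False
        then show ?thesis using r1 r2 mi by (metis le_less_trans less_asym not_le)
      qed
    qed
  qed
qed

end

context hpath
begin

lemma T_lt: "i \<in> T \<Longrightarrow> Suc i < n" by (simp add: Tset_def)
lemma T_iff: "i \<in> T \<longleftrightarrow> 0<i \<and> Suc i<n \<and> up (i-1) \<noteq> up i" by (simp add: Tset_def)

lemma lower_sub: assumes "i<n"
  shows "{x\<in>S. covers_in S x (v i)} \<subseteq> (if Suc i<n \<and> \<not>up i then {v (Suc i)} else {}) \<union> (if 0<i \<and> up (i-1) then {v (i-1)} else {})"
proof
  fix x assume "x \<in> {x\<in>S. covers_in S x (v i)}"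
  then have x: "x\<in>S" "covers_in S x (v i)" by auto
  obtain k where k: "k<n" "x = v k" using vsurj x by blast
  have "hasse_adj S (v k) (v i)" using x k hasse_adj_def by auto
  then have "k = Suc i \<or> i = Suc k" using adj k assms by blast
  then show "x \<in> (if Suc i<n \<and> \<not>up i then {v (Suc i)} else {}) \<union> (if 0<i \<and> up (i-1) then {v (i-1)} else {})"
  proof
    assume h: "k = Suc i"
    then have "\<not> up i" using x k by (auto simp: up_def covers_in_def)
    then show ?thesis using k h by simp
  next
    assume h: "i = Suc k"
    then have "up k" using x k by (auto simp: up_def covers_in_def)
    then show ?thesis using k h by simp
  qed
qed

lemma upper_sub: assumes "i<n"
  shows "{y\<in>S. covers_in S (v i) y} \<subseteq> (if Suc i<n \<and> up i then {v (Suc i)} else {}) \<union> (if 0<i \<and> \<not> up (i-1) then {v (i-1)} else {})"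
proof
  fix x assume "x \<in> {y\<in>S. covers_in S (v i) y}"
  then have x: "x\<in>S" "covers_in S (v i) x" by auto
  obtain k where k: "k<n" "x = v k" using vsurj x by blast
  have "hasse_adj S (v k) (v i)" using x k hasse_adj_def by auto
  then have "k = Suc i \<or> i = Suc k" using adj k assms by blast
  then show "x \<in> (if Suc i<n \<and> up i then {v (Suc i)} else {}) \<union> (if 0<i \<and> \<not> up (i-1) then {v (i-1)} else {})"
  proof
    assume h: "k = Suc i"
    then have "up i" using x k by (auto simp: up_def covers_in_def)
    then show ?thesis using k h by simp
  next
    assume h: "i = Suc k"
    then have "\<not> up k" using x k by (auto simp: up_def covers_in_def)
    then show ?thesis using k h by simp
  qed
qed

lemma card_if2: "2 \<le> card ((if P then {a} else {}) \<union> (if Q then {b} else {})) \<Longrightarrow> P \<and> Q"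
proof (rule ccontr)
  assume a: "2 \<le> card ((if P then {a} else {}) \<union> (if Q then {b} else {}))" "\<not> (P \<and> Q)"
  then have "card ((if P then {a} else {}) \<union> (if Q then {b} else {})) \<le> 1" by (cases P; cases Q) simp_all
  then show False using a by simp
qed

lemma junc_iff: assumes "i<n" shows "v i \<in> junctions S \<longleftrightarrow> i \<in> T"
proof
  assume "v i \<in> junctions S"
  then have "2 \<le> card {x\<in>S. covers_in S x (v i)} \<or> 2 \<le> card {y\<in>S. covers_in S (v i) y}"
    by (simp add: junctions_def)
  then show "i \<in> T"
  proof
    assume h: "2 \<le> card {x\<in>S. covers_in S x (v i)}"
    have "card {x\<in>S. covers_in S x (v i)} \<le> card ((if Suc i<n \<and> \<not>up i then {v (Suc i)} else {}) \<union> (if 0<i \<and> up (i-1) then {v (i-1)} else {}))"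
      by (rule card_mono) (simp, rule lower_sub[OF assms])
    then have "(Suc i<n \<and> \<not>up i) \<and> (0<i \<and> up (i-1))" by (intro card_if2 le_trans[OF h])
    then show ?thesis by (auto simp: T_iff)
  next
    assume h: "2 \<le> card {x\<in>S. covers_in S (v i) x}"
    have "card {x\<in>S. covers_in S (v i) x} \<le> card ((if Suc i<n \<and> up i then {v (Suc i)} else {}) \<union> (if 0<i \<and> \<not> up (i-1) then {v (i-1)} else {}))"
      by (rule card_mono) (simp, rule upper_sub[OF assms])
    then have "(Suc i<n \<and> up i) \<and> (0<i \<and> \<not> up (i-1))" by (intro card_if2 le_trans[OF h])
    then show ?thesis by (auto simp: T_iff)
  qed
next
  assume iT: "i \<in> T"
  then have i0: "0<i" and i1: "Suc i < n" and d: "up (i-1) \<noteq> up i" by (auto simp: T_iff)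
  have si: "Suc (i-1) = i" using i0 by simp
  have i2: "i - 1 < n" using i1 by simp
  have ne: "v (i-1) \<noteq> v (Suc i)"
  proof
    assume "v (i-1) = v (Suc i)"
    then have "i-1 = Suc i" using vinj[OF i2 i1] by blast
    then show False by simp
  qed
  show "v i \<in> junctions S"
  proof (cases "up (i-1)")
    case True
    then have "\<not> up i" using d by simp
    have c1: "covers_in S (v (i-1)) (v i)" using up_cov[of "i-1"] True si i1 by simp
    have c2: "covers_in S (v (Suc i)) (v i)" using down_cov[of i] \<open>\<not> up i\<close> i1 by simp
    have "card {v (i-1), v (Suc i)} \<le> card {x\<in>S. covers_in S x (v i)}"
      by (rule card_mono) (use fin in simp, use c1 c2 in \<open>simp add: covers_in_def\<close>)
    then have "2 \<le> card {x\<in>S. covers_in S x (v i)}" using ne by simp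
    then show ?thesis using vS[of i] i1 by (simp add: junctions_def)
  next
    case False
    then have "up i" using d by simp
    have c1: "covers_in S (v i) (v (i-1))" using down_cov[of "i-1"] False si i1 by simp
    have c2: "covers_in S (v i) (v (Suc i))" using up_cov[of i] \<open>up i\<close> i1 by simp
    have "card {v (i-1), v (Suc i)} \<le> card {x\<in>S. covers_in S (v i) x}"
      by (rule card_mono) (use fin in simp, use c1 c2 in \<open>simp add: covers_in_def\<close>)
    then have "2 \<le> card {x\<in>S. covers_in S (v i) x}" using ne by simp
    then show ?thesis using vS[of i] i1 by (simp add: junctions_def)
  qed
qed

lemma J_eq: "junctions S = v ` T"
proof
  show "junctions S \<subseteq> v ` T"
  proof
    fix s assume s: "s \<in> junctions S"
    then have "s \<in> S" by (simp add: junctions_def)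
    then obtain i where "i<n" "s = v i" using vsurj by blast
    then show "s \<in> v ` T" using junc_iff s by blast
  qed
next
  show "v ` T \<subseteq> junctions S"
  proof (rule image_subsetI)
    fix x assume "x \<in> T" then show "v x \<in> junctions S" using junc_iff[of x] T_lt[of x] by simp
  qed
qed

lemma comp_eq:
  assumes pT: "p \<in> T" and np: "Suc p \<notin> T" and aT: "{a..p} \<subseteq> T" and ap: "a \<le> p"
    and a0: "0 < a" and na: "a - 1 \<notin> T"
  shows "{y \<in> junctions S. (\<lambda>a b. a \<in> junctions S \<and> b \<in> junctions S \<and> hasse_adj S a b)\<^sup>*\<^sup>* (v p) y} = v ` {a..p}"
    (is "{y \<in> ?J. ?R\<^sup>*\<^sup>* (v p) y} = _")
proof
  show "{y \<in> ?J. ?R\<^sup>*\<^sup>* (v p) y} \<subseteq> v ` {a..p}"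
  proof
    fix y assume "y \<in> {y \<in> ?J. ?R\<^sup>*\<^sup>* (v p) y}"
    then have "?R\<^sup>*\<^sup>* (v p) y" by simp
    then show "y \<in> v ` {a..p}"
    proof (induction rule: rtranclp_induct)
      case base
      then show ?case using ap by auto
    next
      case (step y z)
      then obtain k where k: "k \<in> {a..p}" "y = v k" by blast
      have "z \<in> v ` T" using step(2) J_eq by simp
      then obtain k' where k': "k' \<in> T" "z = v k'" by blast
      have kn: "k < n" "k' < n" using k k' aT T_lt by force+
      have "hasse_adj S (v k) (v k')" using step(2) k k' by simp
      then have "k = Suc k' \<or> k' = Suc k" using adj kn by blast
      then have "k' \<in> {a..p}"
      proof
        assume h: "k = Suc k'"
        have "k' \<noteq> a - 1" using na k' by auto
        then show ?thesis using h k a0 by auto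
      next
        assume h: "k' = Suc k"
        have "k' \<noteq> Suc p" using np k' by auto
        then show ?thesis using h k by auto
      qed
      then show ?case using k' by blast
    qed
  qed
next
  have reach: "\<forall>d. d \<le> p - a \<longrightarrow> ?R\<^sup>*\<^sup>* (v p) (v (p - d))"
  proof
    fix d show "d \<le> p - a \<longrightarrow> ?R\<^sup>*\<^sup>* (v p) (v (p - d))"
    proof (induction d)
      case 0 then show ?case by simp
    next
      case (Suc d)
      show ?case
      proof
        assume h: "Suc d \<le> p - a"
        then have r: "?R\<^sup>*\<^sup>* (v p) (v (p - d))" using Suc by simp
        have e: "p - d = Suc (p - Suc d)" using h by simp
        have in1: "p - d \<in> T" "p - Suc d \<in> T" using aT h by auto
        have lt: "p - d < n" "p - Suc d < n" using in1 T_lt by (auto dest: Suc_lessD)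
        have "hasse_adj S (v (p - d)) (v (p - Suc d))"
          using adj[OF lt] e by simp
        moreover have "v (p - d) \<in> ?J" "v (p - Suc d) \<in> ?J" using in1 J_eq by auto
        ultimately have "?R (v (p - d)) (v (p - Suc d))" by simp
        then show "?R\<^sup>*\<^sup>* (v p) (v (p - Suc d))" by (rule rtranclp.rtrancl_into_rtrancl[OF r])
      qed
    qed
  qed
  show "v ` {a..p} \<subseteq> {y \<in> ?J. ?R\<^sup>*\<^sup>* (v p) y}"
  proof
    fix y assume "y \<in> v ` {a..p}"
    then obtain k where k: "k\<in>{a..p}" "y = v k" by blast
    then have "k = p - (p - k)" "p - k \<le> p - a" by auto
    then have "?R\<^sup>*\<^sup>* (v p) y" using reach k by metis
    moreover have "y \<in> ?J" using k aT J_eq by auto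
    ultimately show "y \<in> {y \<in> ?J. ?R\<^sup>*\<^sup>* (v p) y}" by simp
  qed
qed

lemma alt: "a + d = p \<Longrightarrow> {a..p} \<subseteq> T \<Longrightarrow> (up a = up p \<longleftrightarrow> even d)"
proof (induction d arbitrary: p)
  case 0 then show ?case by simp
next
  case (Suc d)
  have "{a..a+d} \<subseteq> T" using Suc by auto
  then have ih: "up a = up (a+d) \<longleftrightarrow> even d" using Suc.IH by simp
  have "a + Suc d \<in> T" using Suc by auto
  then have "up (a+d) \<noteq> up (a + Suc d)" by (auto simp: T_iff)
  then show ?case using ih Suc(2) by auto
qed

end

context hpath
begin

lemma claim:
  assumes ev: "\<forall>C \<in> induced_components S (junctions S). even (card C)"
  shows "p \<in> T \<Longrightarrow> up p \<noteq> up 0 \<Longrightarrow> Suc p \<in> T"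
proof (induction p rule: less_induct)
  case (less p)
  have pT: "p \<in> T" using less.prems by simp
  have pn: "Suc p < n" using pT T_lt by simp
  show ?case
  proof (rule ccontr)
    assume np: "Suc p \<notin> T"
    define a where "a = (LEAST a. {a..p} \<subseteq> T)"
    have a1: "{a..p} \<subseteq> T" unfolding a_def by (rule LeastI[of _ p]) (use pT in simp)
    have a2: "a \<le> p" unfolding a_def by (rule Least_le) (use pT in simp)
    have aT: "a \<in> T" using a1 a2 by auto
    then have a0: "0 < a" by (simp add: T_iff)
    have a3: "a - 1 \<notin> T"
    proof
      assume h: "a - 1 \<in> T"
      have "{a-1..p} \<subseteq> T"
      proof
        fix x assume "x \<in> {a-1..p}"
        then have "x = a - 1 \<or> x \<in> {a..p}" by auto
        then show "x \<in> T" using h a1 by blast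
      qed
      then have "a \<le> a - 1" unfolding a_def by (rule Least_le)
      then show False using a0 by simp
    qed
    have C: "{y \<in> junctions S. (\<lambda>a b. a \<in> junctions S \<and> b \<in> junctions S \<and> hasse_adj S a b)\<^sup>*\<^sup>* (v p) y} = v ` {a..p}"
      by (rule comp_eq[OF pT np a1 a2 a0 a3])
    have vpJ: "v p \<in> junctions S" using junc_iff[of p] pT pn by simp
    have "(\<lambda>x. {y \<in> junctions S. (\<lambda>a b. a \<in> junctions S \<and> b \<in> junctions S \<and> hasse_adj S a b)\<^sup>*\<^sup>* x y}) (v p) \<in> induced_components S (junctions S)"
      unfolding induced_components_def by (rule imageI[OF vpJ])
    then have "v ` {a..p} \<in> induced_components S (junctions S)" using C by simp
    then have e1: "even (card (v ` {a..p}))" using ev by blast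
    have "inj_on v {a..p}"
    proof (rule inj_onI)
      fix x y assume "x \<in> {a..p}" "y \<in> {a..p}" "v x = v y"
      then show "x = y" using vinj[of x y] pn by simp
    qed
    then have "card (v ` {a..p}) = Suc p - a" by (simp add: card_image)
    then have "odd (p - a)" using e1 a2 by (simp add: Suc_diff_le)
    then have "up a \<noteq> up p" using alt[of a "p-a" p] a1 a2 by simp
    then have ua: "up a = up 0" using less.prems by auto
    then have ua1: "up (a-1) \<noteq> up 0" using aT by (auto simp: T_iff)
    define q where "q = (LEAST q. \<forall>k. q \<le> k \<and> k \<le> a-1 \<longrightarrow> up k \<noteq> up 0)"
    have q1: "\<forall>k. q \<le> k \<and> k \<le> a-1 \<longrightarrow> up k \<noteq> up 0"
      unfolding q_def by (rule LeastI[of _ "a-1"]) (use ua1 le_antisym in blast)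
    have q2: "q \<le> a-1" unfolding q_def by (rule Least_le) (use ua1 le_antisym in blast)
    have q0: "q \<noteq> 0" using q1 by auto
    have q3: "up (q-1) = up 0"
    proof (rule ccontr)
      assume h: "up (q-1) \<noteq> up 0"
      have "\<forall>k. q-1 \<le> k \<and> k \<le> a-1 \<longrightarrow> up k \<noteq> up 0"
      proof (intro allI impI)
        fix k assume k: "q-1 \<le> k \<and> k \<le> a-1"
        show "up k \<noteq> up 0"
        proof (cases "k = q-1")
          case True then show ?thesis using h by simp
        next
          case False then have "q \<le> k" using k q0 by arith
          then show ?thesis using q1 k by blast
        qed
      qed
      then have "q \<le> q-1" unfolding q_def by (rule Least_le)
      then show False using q0 by simp
    qed
    have uq: "up q \<noteq> up 0" using q1 q2 by blast
    have qT: "q \<in> T" unfolding T_iff using q0 q2 a2 pn uq q3 by auto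
    have qp: "q < p" using q2 a0 a2 by linarith
    have "Suc q \<in> T" using less.IH[OF qp qT uq] .
    then have uq2: "up q \<noteq> up (Suc q)" by (auto simp: T_iff)
    show False
    proof (cases "Suc q \<le> a-1")
      case True then have "up (Suc q) \<noteq> up 0" using q1 by simp
      then show False using uq uq2 by auto
    next
      case False then have "q = a-1" using q2 by simp
      then show False using qT a3 by simp
    qed
  qed
qed

lemma claim_edge:
  assumes ev: "\<forall>C \<in> induced_components S (junctions S). even (card C)"
  shows "Suc e < n \<Longrightarrow> up e \<noteq> up 0 \<Longrightarrow> e \<in> T"
proof (induction e rule: less_induct)
  case (less e)
  have e0: "e \<noteq> 0"
  proof
    assume "e = 0" then show False using less.prems by simp
  qed
  show ?case
  proof (cases "up (e-1) = up 0")
    case True then show ?thesis using e0 less.prems by (auto simp: T_iff)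
  next
    case False
    have "e - 1 \<in> T" using less.IH[of "e-1"] e0 less.prems False by simp
    then have "Suc (e-1) \<in> T" using claim[OF ev] False by blast
    then show ?thesis using e0 by simp
  qed
qed

lemma Wprop:
  assumes ev: "\<forall>C \<in> induced_components S (junctions S). even (card C)"
  shows "Suc e < n \<Longrightarrow> up e \<noteq> up 0 \<Longrightarrow> Suc (Suc e) < n \<and> up (Suc e) = up 0"
proof -
  assume h: "Suc e < n" "up e \<noteq> up 0"
  have "e \<in> T" using claim_edge[OF ev h] .
  then have "Suc e \<in> T" using claim[OF ev] h(2) by blast
  then show ?thesis using h(2) by (auto simp: T_iff)
qed

lemma chainT: assumes "T = {}" shows "is_chain_set S"
proof -
  have all: "\<forall>k. Suc k < n \<longrightarrow> up k = up 0"
  proof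
    fix k show "Suc k < n \<longrightarrow> up k = up 0"
    proof (induction k)
      case 0 then show ?case by simp
    next
      case (Suc k)
      show ?case
      proof
        assume h: "Suc (Suc k) < n"
        have "Suc k \<notin> T" using assms by simp
        then have "up k = up (Suc k)" using h by (simp add: T_iff)
        then show "up (Suc k) = up 0" using Suc h by simp
      qed
    qed
  qed
  have cmp: "v i \<le> v j \<or> v j \<le> v i" if "i \<le> j" "j < n" for i j
  proof (cases "up 0")
    case True
    then have "\<forall>k. i\<le>k \<and> k<j \<longrightarrow> up k" using all that by auto
    then show ?thesis using up_run that by blast
  next
    case False
    then have "\<forall>k. i\<le>k \<and> k<j \<longrightarrow> \<not> up k" using all that by auto
    then show ?thesis using down_run that by blast
  qed
  show ?thesis unfolding is_chain_set_def
  proof (intro ballI)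
    fix x y assume "x \<in> S" "y \<in> S"
    then obtain i j where "i<n" "j<n" "x = v i" "y = v j" using vsurj by metis
    then show "x \<le> y \<or> y \<le> x" using cmp[of i j] cmp[of j i] by (cases "i \<le> j") auto
  qed
qed

end

context hpath
begin

lemma cnt_fin: "finite {e. e<k \<and> up e}"
  by (rule finite_subset[of _ "{..<k}"]) auto

lemma cnt_0: "cnt 0 = 0" by (simp add: cntv_def)

lemma cnt_Suc: "cnt (Suc k) = cnt k + (if up k then 1 else 0)"
proof -
  have "{e. e < Suc k \<and> up e} = (if up k then insert k {e. e<k \<and> up e} else {e. e<k \<and> up e})"
    by (auto simp: less_Suc_eq)
  then show ?thesis using cnt_fin[of k] by (simp add: cntv_def)
qed

lemma cnt_mono: "k \<le> k' \<Longrightarrow> cnt k \<le> cnt k'"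
  unfolding cntv_def by (rule card_mono) (use cnt_fin in auto)

lemma cnt_eq_noup: "k \<le> e \<Longrightarrow> e < k' \<Longrightarrow> cnt k = cnt k' \<Longrightarrow> \<not> up e"
proof
  assume h: "k \<le> e" "e < k'" "cnt k = cnt k'" "up e"
  have "cnt k \<le> cnt e" using cnt_mono[OF h(1)] .
  moreover have "cnt (Suc e) = cnt e + 1" using cnt_Suc[of e] h by simp
  moreover have "cnt (Suc e) \<le> cnt k'" using cnt_mono[of "Suc e" k'] h by simp
  ultimately show False using h by simp
qed

lemma cnt_noup_eq: "k \<le> k' \<Longrightarrow> (\<forall>e. k \<le> e \<and> e < k' \<longrightarrow> \<not> up e) \<Longrightarrow> cnt k = cnt k'"
proof (induction k')
  case 0 then show ?case by simp
next
  case (Suc k')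
  show ?case
  proof (cases "k = Suc k'")
    case False
    then have "k \<le> k'" using Suc by simp
    then have "cnt k = cnt k'" using Suc by simp
    moreover have "\<not> up k'" using Suc \<open>k \<le> k'\<close> by simp
    ultimately show ?thesis using cnt_Suc by simp
  qed simp
qed

lemma cnt_ivt: "i \<le> cnt m \<Longrightarrow> \<exists>k\<le>m. cnt k = i"
proof (induction m)
  case 0 then show ?case using cnt_0 by simp
next
  case (Suc m)
  show ?case
  proof (cases "i \<le> cnt m")
    case True then show ?thesis using Suc by (meson le_Suc_eq)
  next
    case False
    then have "i = cnt (Suc m)" using Suc.prems cnt_Suc[of m] by (auto split: if_splits)
    then show ?thesis by blast
  qed
qed

lemma gen_le: "a \<le> b \<Longrightarrow> b < n \<Longrightarrow> cnt a = cnt b \<Longrightarrow> v b \<le> v a"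
  using down_run[of b a] cnt_eq_noup[of a _ b] by blast

lemma build:
  assumes A1: "\<not> up 0" and A2: "\<forall>e. Suc e < n \<longrightarrow> up e \<longrightarrow> Suc (Suc e) < n \<and> \<not> up (Suc e)"
    and A3: "\<exists>e. Suc e < n \<and> up e"
  shows "is_wattle S"
proof -
  obtain e0 where e0: "Suc e0 < n" "up e0" using A3 by blast
  define t where "t = Suc (cnt (n-1))"
  define Z where "Z = (\<lambda>i. v ` {k. k < n \<and> cnt k = i})"
  have Zmem: "x \<in> Z i \<longleftrightarrow> (\<exists>k. k < n \<and> cnt k = i \<and> x = v k)" for x i by (auto simp: Z_def)
  have "cnt (Suc e0) \<le> cnt (n-1)" using cnt_mono e0 by simp
  then have t2: "2 \<le> t" using cnt_Suc[of e0] e0 by (simp add: t_def)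
  have chain: "is_chain_set (Z i)" for i
    unfolding is_chain_set_def
  proof (intro ballI)
    fix x y assume "x \<in> Z i" "y \<in> Z i"
    then obtain a b where ab: "a<n" "b<n" "cnt a = i" "cnt b = i" "x = v a" "y = v b" by (auto simp: Zmem)
    show "x \<le> y \<or> y \<le> x"
    proof (cases "a \<le> b")
      case True then show ?thesis using gen_le[of a b] ab by simp
    next
      case False then show ?thesis using gen_le[of b a] ab by simp
    qed
  qed
  have fin: "finite (Z i)" for i by (simp add: Z_def)
  have sub: "Z i \<subseteq> S" for i using vS by (auto simp: Z_def)
  have card2: "2 \<le> card (Z i)" if it: "i < t" for i
  proof -
    have "i \<le> cnt (n-1)" using it by (simp add: t_def)
    then obtain k where k: "k \<le> n-1" "cnt k = i" using cnt_ivt by blast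
    have kn: "k < n" using k e0 by simp
    have "\<exists>k2. k2 < n \<and> k2 \<noteq> k \<and> cnt k2 = i"
    proof (cases "Suc k < n \<and> \<not> up k")
      case True
      then show ?thesis using cnt_Suc[of k] k by (intro exI[of _ "Suc k"]) simp
    next
      case F1: False
      show ?thesis
      proof (cases "0 < k \<and> \<not> up (k-1)")
        case True
        then have "cnt k = cnt (k-1)" using cnt_Suc[of "k-1"] by simp
        moreover have "k - 1 < n" "k - 1 \<noteq> k" using True kn by auto
        ultimately show ?thesis using k by (intro exI[of _ "k-1"]) simp
      next
        case False
        show ?thesis
        proof (cases "k = 0")
          case True then show ?thesis using F1 A1 e0 by simp
        next
          case k0: False
          then have "up (k-1)" using False by simp
          moreover have "Suc (k-1) < n" "Suc (k-1) = k" using kn k0 by auto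
          ultimately have "Suc (Suc (k-1)) < n \<and> \<not> up (Suc (k-1))" using A2 by blast
          then show ?thesis using F1 k0 by simp
        qed
      qed
    qed
    then obtain k2 where k2: "k2 < n" "k2 \<noteq> k" "cnt k2 = i" by blast
    have ne: "v k \<noteq> v k2" using vinj[OF kn k2(1)] k2(2) by metis
    have "{v k, v k2} \<subseteq> Z i" using k kn k2 by (auto simp: Zmem)
    then have "card {v k, v k2} \<le> card (Z i)" using fin by (rule card_mono[rotated])
    then show ?thesis using ne by simp
  qed
  have disj: "Z i \<inter> Z j = {}" if "i \<noteq> j" for i j
  proof (rule ccontr)
    assume "Z i \<inter> Z j \<noteq> {}"
    then obtain x where "x \<in> Z i" "x \<in> Z j" by blast
    then obtain a b where ab: "a<n" "cnt a = i" "x = v a" "b<n" "cnt b = j" "x = v b" unfolding Zmem by blast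
    then have "a = b" using vinj by metis
    then show False using ab that by simp
  qed
  have un: "(\<Union>i<t. Z i) = S"
  proof
    show "(\<Union>i<t. Z i) \<subseteq> S" using sub by blast
  next
    show "S \<subseteq> (\<Union>i<t. Z i)"
    proof
      fix s assume "s \<in> S"
      then obtain k where k: "k<n" "s = v k" using vsurj by blast
      then have "cnt k \<le> cnt (n-1)" using cnt_mono by simp
      then have "cnt k < t" by (simp add: t_def)
      moreover have "s \<in> Z (cnt k)" using k by (auto simp: Zmem)
      ultimately show "s \<in> (\<Union>i<t. Z i)" by blast
    qed
  qed
  have cross: "x < y \<longleftrightarrow> (j = Suc i \<and> (\<forall>z\<in>Z i. x \<le> z) \<and> (\<forall>z\<in>Z j. z \<le> y))"
    if it: "i<t" and jt: "j<t" and ij: "i \<noteq> j" and xi: "x \<in> Z i" and yj: "y \<in> Z j" for i j x y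
  proof -
    obtain a where a: "a<n" "cnt a = i" "x = v a" using xi by (auto simp: Zmem)
    obtain b where b: "b<n" "cnt b = j" "y = v b" using yj by (auto simp: Zmem)
    show ?thesis
    proof
      assume "x < y"
      then have "v a < v b" using a b by simp
      from lt_run[OF a(1) b(1) this]
      show "j = Suc i \<and> (\<forall>z\<in>Z i. x \<le> z) \<and> (\<forall>z\<in>Z j. z \<le> y)"
      proof
        assume h: "a<b \<and> (\<forall>k. a\<le>k \<and> k<b \<longrightarrow> up k)"
        have ua: "up a" using h by simp
        have ba: "b = Suc a"
        proof (rule ccontr)
          assume "b \<noteq> Suc a"
          then have "Suc a < b" using h by simp
          then have "up (Suc a)" using h by simp
          moreover have "\<not> up (Suc a)" using A2 ua \<open>Suc a < b\<close> b(1) by simp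
          ultimately show False by simp
        qed
        have ji: "j = Suc i" using a b ba ua cnt_Suc[of a] by simp
        have least: "\<forall>z\<in>Z i. x \<le> z"
        proof
          fix z assume "z \<in> Z i"
          then obtain k where k: "k<n" "cnt k = i" "z = v k" by (auto simp: Zmem)
          show "x \<le> z"
          proof (cases "k \<le> a")
            case True then show ?thesis using gen_le[of k a] a k by simp
          next
            case False
            then have "cnt (Suc a) \<le> cnt k" using cnt_mono by simp
            then show ?thesis using ua cnt_Suc[of a] a k by simp
          qed
        qed
        have greatest: "\<forall>z\<in>Z j. z \<le> y"
        proof
          fix z assume "z \<in> Z j"
          then obtain k where k: "k<n" "cnt k = j" "z = v k" by (auto simp: Zmem)
          show "z \<le> y"
          proof (cases "b \<le> k")
            case True then show ?thesis using gen_le[of b k] b k by simp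
          next
            case False
            then have "cnt k \<le> cnt a" using cnt_mono ba by simp
            then show ?thesis using ji a k by simp
          qed
        qed
        show ?thesis using ji least greatest by simp
      next
        assume h: "b<a \<and> (\<forall>k. b\<le>k \<and> k<a \<longrightarrow> \<not> up k)"
        then have "cnt b = cnt a" using cnt_noup_eq[of b a] by simp
        then show ?thesis using a b ij by simp
      qed
    next
      assume R: "j = Suc i \<and> (\<forall>z\<in>Z i. x \<le> z) \<and> (\<forall>z\<in>Z j. z \<le> y)"
      have an: "Suc a < n"
      proof (rule ccontr)
        assume "\<not> Suc a < n"
        then have "a = n - 1" using a by simp
        then have "j = t" using R a by (simp add: t_def)
        then show False using jt by simp
      qed
      have ua: "up a"
      proof (rule ccontr)
        assume na: "\<not> up a"
        then have l: "v (Suc a) < v a" using down_lt an by simp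
        have "cnt (Suc a) = i" using cnt_Suc[of a] na a by simp
        then have "v (Suc a) \<in> Z i" using an by (auto simp: Zmem)
        then have "v a \<le> v (Suc a)" using R a by blast
        then show False using l by simp
      qed
      have b0: "0 < b"
      proof (rule ccontr)
        assume "\<not> 0 < b" then have "b = 0" by simp
        then show False using b R cnt_0 by simp
      qed
      have bb: "Suc (b-1) = b" using b0 by simp
      have ub: "up (b-1)"
      proof (rule ccontr)
        assume nb: "\<not> up (b-1)"
        then have l: "v b < v (b-1)" using down_lt[of "b-1"] bb b by simp
        have "cnt (b-1) = j" using cnt_Suc[of "b-1"] nb b bb by simp
        moreover have "b - 1 < n" using b by simp
        ultimately have "v (b-1) \<in> Z j" unfolding Zmem by blast
        then have "v (b-1) \<le> v b" using R b by blast
        then show False using l by simp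
      qed
      have cb: "cnt (b-1) = i" using cnt_Suc[of "b-1"] ub b bb R by simp
      have ca: "cnt (Suc a) = Suc i" using cnt_Suc[of a] ua a by simp
      have "b = Suc a"
      proof (rule ccontr)
        assume "b \<noteq> Suc a"
        then consider "Suc a \<le> b - 1" | "b \<le> a" by linarith
        then show False
        proof cases
          case 1 then have "cnt (Suc a) \<le> cnt (b-1)" by (rule cnt_mono)
          then show False using ca cb by simp
        next
          case 2 then have "cnt b \<le> cnt a" by (rule cnt_mono)
          then show False using a b R by simp
        qed
      qed
      then show "x < y" using ua a b by (simp add: up_def)
    qed
  qed
  have c1: "\<forall>i<t. Z i \<subseteq> S \<and> is_chain_set (Z i) \<and> finite (Z i) \<and> 2 \<le> card (Z i)"
    using sub chain fin card2 by blast
  have c2: "\<forall>i<t. \<forall>j<t. i \<noteq> j \<longrightarrow> Z i \<inter> Z j = {}" using disj by blast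
  have c3: "\<forall>i<t. \<forall>j<t. i \<noteq> j \<longrightarrow> (\<forall>x\<in>Z i. \<forall>y\<in>Z j.
          x < y \<longleftrightarrow> (j = Suc i \<and> (\<forall>z\<in>Z i. x \<le> z) \<and> (\<forall>z\<in>Z j. z \<le> y)))"
  proof (intro allI impI ballI)
    fix i j x y assume "i<t" "j<t" "i \<noteq> j" "x \<in> Z i" "y \<in> Z j"
    then show "x < y \<longleftrightarrow> (j = Suc i \<and> (\<forall>z\<in>Z i. x \<le> z) \<and> (\<forall>z\<in>Z j. z \<le> y))"
      by (rule cross)
  qed
  show ?thesis unfolding is_wattle_def
    by (rule exI[of _ t], rule exI[of _ Z]) (intro conjI; fact)
qed

lemma rev_path: "hpath S (\<lambda>k. v (n - 1 - k)) n"
proof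
  show "finite S" by (rule fin)
  have b1: "bij_betw (\<lambda>k. n - 1 - k) {0..<n} {0..<n}"
    by (rule bij_betw_byWitness[where f'="\<lambda>k. n - 1 - k"]) auto
  have "bij_betw (v \<circ> (\<lambda>k. n - 1 - k)) {0..<n} S" by (rule bij_betw_trans[OF b1 bij])
  then show "bij_betw (\<lambda>k. v (n - 1 - k)) {0..<n} S" by (simp add: comp_def)
next
  fix i j assume "i < n" "j < n"
  then have "hasse_adj S (v (n - 1 - i)) (v (n - 1 - j)) \<longleftrightarrow> (n - 1 - i = Suc (n - 1 - j) \<or> n - 1 - j = Suc (n - 1 - i))"
    using adj by simp
  also have "\<dots> \<longleftrightarrow> (i = Suc j \<or> j = Suc i)" using \<open>i < n\<close> \<open>j < n\<close> by linarith
  finally show "hasse_adj S (v (n - 1 - i)) (v (n - 1 - j)) \<longleftrightarrow> (i = Suc j \<or> j = Suc i)" .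
qed

lemma rev_up: assumes "Suc k < n" shows "upv (\<lambda>k. v (n - 1 - k)) k \<longleftrightarrow> \<not> up (n - 2 - k)"
proof -
  define e where "e = n - 2 - k"
  have e1: "n - 1 - k = Suc e" "n - 1 - Suc k = e" "Suc e < n" using assms by (auto simp: e_def)
  have "upv (\<lambda>k. v (n - 1 - k)) k \<longleftrightarrow> v (Suc e) < v e" using e1 by (simp add: upv_def)
  also have "\<dots> \<longleftrightarrow> \<not> up e" using down_lt[of e] e1 by (auto simp: up_def)
  finally show ?thesis by (simp add: e_def)
qed

lemma main_rev:
  assumes ev: "\<forall>C \<in> induced_components S (junctions S). even (card C)"
  shows "is_chain_set S \<or> is_wattle S"
proof (cases "T = {}")
  case True then show ?thesis using chainT by simp
next
  case False
  then obtain p where pT: "p \<in> T" by blast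
  then have p: "0 < p" "Suc p < n" "up (p-1) \<noteq> up p" by (auto simp: T_iff)
  have "\<exists>e. Suc e < n \<and> up e \<noteq> up 0"
  proof (cases "up p = up 0")
    case True then show ?thesis using p by (intro exI[of _ "p-1"]) auto
  next
    case False then show ?thesis using p by blast
  qed
  then obtain e1 where e1: "Suc e1 < n" "up e1 \<noteq> up 0" by blast
  note W = Wprop[OF ev]
  show ?thesis
  proof (cases "up 0")
    case False
    have "is_wattle S"
    proof (rule build)
      show "\<not> up 0" by (rule False)
      show "\<forall>e. Suc e < n \<longrightarrow> up e \<longrightarrow> Suc (Suc e) < n \<and> \<not> up (Suc e)"
        using W False by blast
      show "\<exists>e. Suc e < n \<and> up e" using e1 False by blast
    qed
    then show ?thesis by simp
  next
    case True
    interpret R: hpath S "\<lambda>k. v (n - 1 - k)" n by (rule rev_path)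
    have n2: "2 \<le> n" using e1 by simp
    have ul: "up (n-2)"
    proof (rule ccontr)
      assume "\<not> up (n-2)"
      then have "Suc (Suc (n-2)) < n" using W[of "n-2"] True n2 by simp
      then show False by simp
    qed
    have "is_wattle S"
    proof (rule R.build)
      show "\<not> upv (\<lambda>k. v (n - 1 - k)) 0" using rev_up[of 0] n2 ul by simp
      show "\<forall>e. Suc e < n \<longrightarrow> upv (\<lambda>k. v (n - 1 - k)) e \<longrightarrow> Suc (Suc e) < n \<and> \<not> upv (\<lambda>k. v (n - 1 - k)) (Suc e)"
      proof (intro allI impI)
        fix e assume h: "Suc e < n" "upv (\<lambda>k. v (n - 1 - k)) e"
        define f where "f = n - 2 - e"
        have nf: "\<not> up f" using rev_up[OF h(1)] h(2) by (simp add: f_def)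
        have f0: "f \<noteq> 0"
        proof
          assume "f = 0" then show False using nf True by simp
        qed
        then have s2: "Suc (Suc e) < n" using h(1) by (simp add: f_def)
        have "up (f-1)"
        proof (rule ccontr)
          assume "\<not> up (f-1)"
          then have "up (Suc (f-1)) = up 0" using W[of "f-1"] True h(1) f0 by (simp add: f_def)
          then show False using nf f0 True by simp
        qed
        moreover have "n - 2 - Suc e = f - 1" by (simp add: f_def)
        ultimately have "\<not> upv (\<lambda>k. v (n - 1 - k)) (Suc e)" using rev_up[OF s2] by simp
        then show "Suc (Suc e) < n \<and> \<not> upv (\<lambda>k. v (n - 1 - k)) (Suc e)" using s2 by simp
      qed
      show "\<exists>e. Suc e < n \<and> upv (\<lambda>k. v (n - 1 - k)) e"
      proof (intro exI conjI)
        show "Suc (n - 2 - e1) < n" using e1 by simp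
        have "n - 2 - (n - 2 - e1) = e1" using e1 by simp
        then show "upv (\<lambda>k. v (n - 1 - k)) (n - 2 - e1)" using rev_up[of "n - 2 - e1"] e1 True by simp
      qed
    qed
    then show ?thesis by simp
  qed
qed

end

lemma chain_min: "finite Z \<Longrightarrow> Z \<noteq> {} \<Longrightarrow> is_chain_set Z \<Longrightarrow> \<exists>m\<in>Z. \<forall>z\<in>Z. m \<le> z"
proof -
  assume a: "finite Z" "Z \<noteq> {}" "is_chain_set Z"
  obtain m where m: "m \<in> Z" "\<forall>b\<in>Z. b \<le> m \<longrightarrow> m = b" using finite_has_minimal[OF a(1,2)] by blast
  have "\<forall>z\<in>Z. m \<le> z"
  proof
    fix z assume "z \<in> Z"
    then have "m \<le> z \<or> z \<le> m" using a(3) m(1) by (simp add: is_chain_set_def)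
    then show "m \<le> z" using m \<open>z \<in> Z\<close> by auto
  qed
  then show ?thesis using m(1) by blast
qed

lemma chain_max: "finite Z \<Longrightarrow> Z \<noteq> {} \<Longrightarrow> is_chain_set Z \<Longrightarrow> \<exists>m\<in>Z. \<forall>z\<in>Z. z \<le> m"
proof -
  assume a: "finite Z" "Z \<noteq> {}" "is_chain_set Z"
  obtain m where m: "m \<in> Z" "\<forall>b\<in>Z. m \<le> b \<longrightarrow> m = b" using finite_has_maximal[OF a(1,2)] by blast
  have "\<forall>z\<in>Z. z \<le> m"
  proof
    fix z assume "z \<in> Z"
    then have "m \<le> z \<or> z \<le> m" using a(3) m(1) by (simp add: is_chain_set_def)
    then show "z \<le> m" using m \<open>z \<in> Z\<close> by auto
  qed
  then show ?thesis using m(1) by blast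
qed

lemma cover_above:
  assumes "finite S" "x \<in> S" "y \<in> S" "x < y"
  shows "\<exists>z. covers_in S x z \<and> z \<le> y"
proof -
  let ?M = "{z\<in>S. x<z \<and> z \<le> y}"
  have "finite ?M" "?M \<noteq> {}" using assms by auto
  then obtain m where m: "m \<in> ?M" "\<forall>b\<in>?M. b \<le> m \<longrightarrow> m = b" using finite_has_minimal by blast
  have "covers_in S x m" unfolding covers_in_def
  proof (intro conjI)
    show "\<not> (\<exists>w\<in>S. x < w \<and> w < m)"
    proof
      assume "\<exists>w\<in>S. x < w \<and> w < m"
      then obtain w where w: "w \<in> S" "x < w" "w < m" by blast
      then have "w \<in> ?M" using m by auto
      then have "m = w" using m w by auto
      then show False using w by simp
    qed
  qed (use m assms in auto)
  then show ?thesis using m by blast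
qed

lemma cover_below:
  assumes "finite S" "x \<in> S" "y \<in> S" "x < y"
  shows "\<exists>z. covers_in S z y \<and> x \<le> z"
proof -
  let ?M = "{z\<in>S. x \<le> z \<and> z < y}"
  have "finite ?M" "?M \<noteq> {}" using assms by auto
  then obtain m where m: "m \<in> ?M" "\<forall>b\<in>?M. m \<le> b \<longrightarrow> m = b" using finite_has_maximal by blast
  have "covers_in S m y" unfolding covers_in_def
  proof (intro conjI)
    show "\<not> (\<exists>w\<in>S. m < w \<and> w < y)"
    proof
      assume "\<exists>w\<in>S. m < w \<and> w < y"
      then obtain w where w: "w \<in> S" "m < w" "w < y" by blast
      then have "w \<in> ?M" using m by auto
      then have "m = w" using m w by auto
      then show False using w by simp
    qed
  qed (use m assms in auto)
  then show ?thesis using m by blast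
qed

lemma chain_nojunc: assumes "finite S" "is_chain_set S" shows "junctions S = {}"
proof (rule ccontr)
  assume "junctions S \<noteq> {}"
  then obtain s where s: "s \<in> S" "2 \<le> card {x \<in> S. covers_in S x s} \<or> 2 \<le> card {y \<in> S. covers_in S s y}"
    by (auto simp: junctions_def)
  from s(2) show False
  proof
    assume "2 \<le> card {x \<in> S. covers_in S x s}"
    then obtain a b where ab: "a \<in> S" "b \<in> S" "covers_in S a s" "covers_in S b s" "a \<noteq> b"
      using two_elems[of "{x \<in> S. covers_in S x s}"] assms(1) by auto
    then have "a < b \<or> b < a" using assms(2) by (auto simp: is_chain_set_def order_less_le)
    then show False using ab by (auto simp: covers_in_def)
  next
    assume "2 \<le> card {x \<in> S. covers_in S s x}"
    then obtain a b where ab: "a \<in> S" "b \<in> S" "covers_in S s a" "covers_in S s b" "a \<noteq> b"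
      using two_elems[of "{x \<in> S. covers_in S s x}"] assms(1) by auto
    then have "a < b \<or> b < a" using assms(2) by (auto simp: is_chain_set_def order_less_le)
    then show False using ab by (auto simp: covers_in_def)
  qed
qed

lemma invol_even: "finite C \<Longrightarrow> (\<forall>x\<in>C. f x \<in> C \<and> f x \<noteq> x \<and> f (f x) = x) \<Longrightarrow> even (card C)"
proof (induction "card C" arbitrary: C rule: less_induct)
  case less
  show ?case
  proof (cases "C = {}")
    case True then show ?thesis by simp
  next
    case False
    then obtain x where x: "x \<in> C" by blast
    have fx: "f x \<in> C" "f x \<noteq> x" using less.prems x by auto
    let ?C' = "C - {x, f x}"
    have sub: "{x, f x} \<subseteq> C" using x fx by simp
    have c2: "card {x, f x} = 2" using fx by simp
    have cC: "card ?C' = card C - 2" using card_Diff_subset[OF _ sub] c2 by simp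
    have "card {x, f x} \<le> card C" using card_mono[OF less.prems(1) sub] .
    then have ge: "2 \<le> card C" using c2 by simp
    have lt: "card ?C' < card C" using cC ge by simp
    have cl: "\<forall>y\<in>?C'. f y \<in> ?C' \<and> f y \<noteq> y \<and> f (f y) = y"
    proof
      fix y assume y: "y \<in> ?C'"
      then have yC: "y \<in> C" "y \<noteq> x" "y \<noteq> f x" by auto
      have p: "f y \<in> C" "f y \<noteq> y" "f (f y) = y" using less.prems yC by auto
      have "f y \<noteq> x"
      proof
        assume "f y = x" then have "f x = y" using p by simp
        then show False using yC by simp
      qed
      moreover have "f y \<noteq> f x"
      proof
        assume "f y = f x" then have "f (f y) = f (f x)" by simp
        then have "y = x" using p less.prems x by simp
        then show False using yC by simp
      qed
      ultimately show "f y \<in> ?C' \<and> f y \<noteq> y \<and> f (f y) = y" using p by simp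
    qed
    have "even (card ?C')" using less.hyps[OF lt _ cl] less.prems(1) by simp
    then show ?thesis using cC ge by (metis add_diff_inverse_nat dvd_add_left_iff even_numeral not_le)
  qed
qed

lemma wattle_even:
  assumes finS: "finite S" and W: "is_wattle S"
  shows "\<forall>C\<in>induced_components S (junctions S). even (card C)"
proof -
  from W obtain t Z where tz: "2 \<le> t \<and>
      (\<forall>i<t. Z i \<subseteq> S \<and> is_chain_set (Z i) \<and> finite (Z i) \<and> 2 \<le> card (Z i)) \<and>
      (\<forall>i<t. \<forall>j<t. i \<noteq> j \<longrightarrow> Z i \<inter> Z j = {}) \<and>
      (\<Union>i<t. Z i) = S \<and>
      (\<forall>i<t. \<forall>j<t. i \<noteq> j \<longrightarrow> (\<forall>x\<in>Z i. \<forall>y\<in>Z j.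
          x < y \<longleftrightarrow> (j = Suc i \<and> (\<forall>z\<in>Z i. x \<le> z) \<and> (\<forall>z\<in>Z j. z \<le> y))))"
    unfolding is_wattle_def by (elim exE) (erule that)
  note t2 = conjunct1[OF tz]
  note Zp = conjunct1[OF conjunct2[OF tz]]
  note dj = conjunct1[OF conjunct2[OF conjunct2[OF tz]]]
  note un = conjunct1[OF conjunct2[OF conjunct2[OF conjunct2[OF tz]]]]
  note cr = conjunct2[OF conjunct2[OF conjunct2[OF conjunct2[OF tz]]]]
  have Zne: "Z i \<noteq> {}" if "i<t" for i
  proof -
    have "2 \<le> card (Z i)" using Zp that by blast
    then show ?thesis by auto
  qed
  have Zf: "finite (Z i)" "is_chain_set (Z i)" if "i<t" for i using Zp that by blast+
  have "\<forall>i. \<exists>m. i<t \<longrightarrow> m \<in> Z i \<and> (\<forall>z\<in>Z i. m \<le> z)"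
  proof
    fix i show "\<exists>m. i<t \<longrightarrow> m \<in> Z i \<and> (\<forall>z\<in>Z i. m \<le> z)"
    proof (cases "i<t")
      case True
      then obtain m where "m \<in> Z i" "\<forall>z\<in>Z i. m \<le> z" using chain_min[OF Zf(1)[OF True] Zne[OF True] Zf(2)[OF True]] by blast
      then show ?thesis by blast
    qed simp
  qed
  then obtain mn where mn': "\<forall>i. i<t \<longrightarrow> mn i \<in> Z i \<and> (\<forall>z\<in>Z i. mn i \<le> z)" by (rule choice[THEN exE])
  have mn: "\<forall>i<t. mn i \<in> Z i \<and> (\<forall>z\<in>Z i. mn i \<le> z)" using mn' by simp
  have "\<forall>i. \<exists>m. i<t \<longrightarrow> m \<in> Z i \<and> (\<forall>z\<in>Z i. z \<le> m)"
  proof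
    fix i show "\<exists>m. i<t \<longrightarrow> m \<in> Z i \<and> (\<forall>z\<in>Z i. z \<le> m)"
    proof (cases "i<t")
      case True
      then obtain m where "m \<in> Z i" "\<forall>z\<in>Z i. z \<le> m" using chain_max[OF Zf(1)[OF True] Zne[OF True] Zf(2)[OF True]] by blast
      then show ?thesis by blast
    qed simp
  qed
  then obtain mx where mx': "\<forall>i. i<t \<longrightarrow> mx i \<in> Z i \<and> (\<forall>z\<in>Z i. z \<le> mx i)" by (rule choice[THEN exE])
  have mx: "\<forall>i<t. mx i \<in> Z i \<and> (\<forall>z\<in>Z i. z \<le> mx i)" using mx' by simp
  have same: "i = j" if "i<t" "j<t" "x \<in> Z i" "x \<in> Z j" for i j x using dj that by blast
  have ZS: "Z i \<subseteq> S" if "i<t" for i using Zp that by blast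
  have inS: "\<exists>i<t. x \<in> Z i" if "x \<in> S" for x using un that by blast
  have mnmx: "mn i \<noteq> mx i" if it: "i<t" for i
  proof
    assume eq: "mn i = mx i"
    obtain a b where ab: "a \<in> Z i" "b \<in> Z i" "a \<noteq> b" using two_elems[of "Z i"] Zp it by blast
    have "a = mn i" using mn mx eq ab it by (metis order_antisym)
    moreover have "b = mn i" using mn mx eq ab it by (metis order_antisym)
    ultimately show False using ab by simp
  qed
  have mn_inj: "i = j" if "i<t" "j<t" "mn i = mn j" for i j
  proof -
    have "mn i \<in> Z i" "mn i \<in> Z j" using mn that by auto
    then show ?thesis using same that by blast
  qed
  have mx_inj: "i = j" if "i<t" "j<t" "mx i = mx j" for i j
  proof -
    have "mx i \<in> Z i" "mx i \<in> Z j" using mx that by auto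
    then show ?thesis using same that by blast
  qed
  have mnmx2: "False" if "i<t" "j<t" "mn i = mx j" for i j
  proof -
    have "mn i \<in> Z i" "mn i \<in> Z j" using mn mx that by auto
    then have "i = j" using same that by blast
    then show False using mnmx that by simp
  qed
  have isMn: "(\<forall>z\<in>Z i. x \<le> z) \<longleftrightarrow> x = mn i" if "i<t" "x \<in> Z i" for i x
    using mn that by (metis order_antisym)
  have isMx: "(\<forall>z\<in>Z i. z \<le> x) \<longleftrightarrow> x = mx i" if "i<t" "x \<in> Z i" for i x
    using mx that by (metis order_antisym)
  have W1: "x < y \<longleftrightarrow> (j = Suc i \<and> x = mn i \<and> y = mx j)"
    if "i<t" "j<t" "i\<noteq>j" "x\<in>Z i" "y\<in>Z j" for i j x y
  proof -
    have "x < y \<longleftrightarrow> (j = Suc i \<and> (\<forall>z\<in>Z i. x \<le> z) \<and> (\<forall>z\<in>Z j. z \<le> y))" using cr that by blast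
    then show ?thesis using isMn[of i x] isMx[of j y] that by simp
  qed
  have W3: "covers_in S (mn k) (mx (Suc k))" if k: "Suc k < t" for k
  proof -
    have k1: "k < t" using k by simp
    have lt: "mn k < mx (Suc k)" using W1[of k "Suc k" "mn k" "mx (Suc k)"] k k1 mn mx by simp
    have "\<not> (\<exists>z\<in>S. mn k < z \<and> z < mx (Suc k))"
    proof
      assume "\<exists>z\<in>S. mn k < z \<and> z < mx (Suc k)"
      then obtain z where z: "z \<in> S" "mn k < z" "z < mx (Suc k)" by blast
      obtain l where l: "l<t" "z \<in> Z l" using inS z(1) by blast
      show False
      proof (cases "l = k")
        case True
        then have "z = mn k" using W1[of k "Suc k" z "mx (Suc k)"] k k1 l z mx by simp
        then show False using z by simp
      next
        case False
        then have "z = mx l" using W1[of k l "mn k" z] k1 l z mn by simp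
        moreover have "l = Suc k" using W1[of k l "mn k" z] k1 l z mn False by simp
        ultimately show False using z by simp
      qed
    qed
    then show ?thesis unfolding covers_in_def using lt ZS mn mx k k1 by blast
  qed
  have W4: "(\<exists>k. Suc k < t \<and> s = mx (Suc k)) \<or> (\<exists>k. Suc k < t \<and> s = mn k)"
    if sJ: "s \<in> junctions S" for s
  proof -
    have sS: "s \<in> S" using sJ by (simp add: junctions_def)
    obtain l where l: "l<t" "s \<in> Z l" using inS sS by blast
    have "2 \<le> card {x \<in> S. covers_in S x s} \<or> 2 \<le> card {y \<in> S. covers_in S s y}"
      using sJ by (simp add: junctions_def)
    then show ?thesis
    proof
      assume "2 \<le> card {x \<in> S. covers_in S x s}"
      then obtain a b where ab: "a \<in> S" "b \<in> S" "covers_in S a s" "covers_in S b s" "a \<noteq> b"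
        using two_elems[of "{x \<in> S. covers_in S x s}"] finS by auto
      have key: "\<exists>k. Suc k < t \<and> s = mx (Suc k)" if cc: "c \<in> S" "c < s" "\<not> c \<in> Z l" for c
      proof -
        obtain lc where lc: "lc < t" "c \<in> Z lc" using inS cc(1) by blast
        have "lc \<noteq> l" using lc cc by blast
        then have "l = Suc lc \<and> s = mx l" using W1[of lc l c s] lc l cc by simp
        then show ?thesis using l by blast
      qed
      show ?thesis
      proof (cases "a \<in> Z l \<and> b \<in> Z l")
        case True
        then have "a \<le> b \<or> b \<le> a" using Zp l by (simp add: is_chain_set_def)
        then have "a < b \<or> b < a" using ab by (auto simp: order_less_le)
        then show ?thesis using ab by (auto simp: covers_in_def)
      next
        case False
        then show ?thesis using key ab by (auto simp: covers_in_def)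
      qed
    next
      assume "2 \<le> card {x \<in> S. covers_in S s x}"
      then obtain a b where ab: "a \<in> S" "b \<in> S" "covers_in S s a" "covers_in S s b" "a \<noteq> b"
        using two_elems[of "{x \<in> S. covers_in S s x}"] finS by auto
      have key: "\<exists>k. Suc k < t \<and> s = mn k" if cc: "c \<in> S" "s < c" "\<not> c \<in> Z l" for c
      proof -
        obtain lc where lc: "lc < t" "c \<in> Z lc" using inS cc(1) by blast
        have "lc \<noteq> l" using lc cc by blast
        then have "lc = Suc l \<and> s = mn l" using W1[of l lc s c] lc l cc by simp
        then show ?thesis using lc by blast
      qed
      show ?thesis
      proof (cases "a \<in> Z l \<and> b \<in> Z l")
        case True
        then have "a \<le> b \<or> b \<le> a" using Zp l by (simp add: is_chain_set_def)
        then have "a < b \<or> b < a" using ab by (auto simp: order_less_le)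
        then show ?thesis using ab by (auto simp: covers_in_def)
      next
        case False
        then show ?thesis using key ab by (auto simp: covers_in_def)
      qed
    qed
  qed
  have W5: "mn k \<in> junctions S" if k: "Suc k < t" for k
  proof -
    have k1: "k < t" using k by simp
    have "mn k \<le> mx k" using mn mx k1 by blast
    then have lt: "mn k < mx k" using mnmx k1 by (simp add: order_less_le)
    obtain z where z: "covers_in S (mn k) z" "z \<le> mx k"
      using cover_above[OF finS _ _ lt] ZS mn mx k1 by blast
    have ne: "z \<noteq> mx (Suc k)"
    proof
      assume "z = mx (Suc k)"
      then have le: "mx (Suc k) \<le> mx k" using z by simp
      show False
      proof (cases "mx (Suc k) = mx k")
        case True then show False using mx_inj[of "Suc k" k] k k1 by simp
      next
        case False
        then have "mx (Suc k) < mx k" using le by simp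
        then show False using W1[of "Suc k" k "mx (Suc k)" "mx k"] k k1 mx by simp
      qed
    qed
    have "{z, mx (Suc k)} \<subseteq> {y \<in> S. covers_in S (mn k) y}"
      using z W3[OF k] by (auto simp: covers_in_def)
    then have "card {z, mx (Suc k)} \<le> card {y \<in> S. covers_in S (mn k) y}"
      by (rule card_mono[rotated]) (use finS in simp)
    then have "2 \<le> card {y \<in> S. covers_in S (mn k) y}" using ne by simp
    then show ?thesis using ZS mn k1 by (auto simp: junctions_def)
  qed
  have W6: "mx (Suc k) \<in> junctions S" if k: "Suc k < t" for k
  proof -
    have k1: "k < t" using k by simp
    have "mn (Suc k) \<le> mx (Suc k)" using mn mx k by blast
    then have lt: "mn (Suc k) < mx (Suc k)" using mnmx k by (simp add: order_less_le)
    obtain z where z: "covers_in S z (mx (Suc k))" "mn (Suc k) \<le> z"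
      using cover_below[OF finS _ _ lt] ZS mn mx k by blast
    have ne: "z \<noteq> mn k"
    proof
      assume "z = mn k"
      then have le: "mn (Suc k) \<le> mn k" using z by simp
      show False
      proof (cases "mn (Suc k) = mn k")
        case True then show False using mn_inj[of "Suc k" k] k k1 by simp
      next
        case False
        then have "mn (Suc k) < mn k" using le by simp
        then show False using W1[of "Suc k" k "mn (Suc k)" "mn k"] k k1 mn by simp
      qed
    qed
    have "{z, mn k} \<subseteq> {y \<in> S. covers_in S y (mx (Suc k))}"
      using z W3[OF k] by (auto simp: covers_in_def)
    then have "card {z, mn k} \<le> card {y \<in> S. covers_in S y (mx (Suc k))}"
      by (rule card_mono[rotated]) (use finS in simp)
    then have "2 \<le> card {y \<in> S. covers_in S y (mx (Suc k))}" using ne by simp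
    then show ?thesis using ZS mx k by (auto simp: junctions_def)
  qed
  define P where "P s y \<longleftrightarrow> (\<exists>k. Suc k < t \<and> ((s = mn k \<and> y = mx (Suc k)) \<or> (s = mx (Suc k) \<and> y = mn k)))" for s y
  have Psym: "P y s" if "P s y" for s y using that unfolding P_def by blast
  have Puniq: "y1 = y2" if p12: "P s y1" "P s y2" for s y1 y2
  proof -
    obtain k1 where k1: "Suc k1 < t" "(s = mn k1 \<and> y1 = mx (Suc k1)) \<or> (s = mx (Suc k1) \<and> y1 = mn k1)"
      using p12(1) by (auto simp: P_def)
    obtain k2 where k2: "Suc k2 < t" "(s = mn k2 \<and> y2 = mx (Suc k2)) \<or> (s = mx (Suc k2) \<and> y2 = mn k2)"
      using p12(2) by (auto simp: P_def)
    have a1: "k1 < t" "k2 < t" using k1 k2 by auto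
    from k1(2) show ?thesis
    proof
      assume c1: "s = mn k1 \<and> y1 = mx (Suc k1)"
      from k2(2) show ?thesis
      proof
        assume c2: "s = mn k2 \<and> y2 = mx (Suc k2)"
        have "mn k1 = mn k2" using c1 c2 by simp
        then have "k1 = k2" using mn_inj a1 by blast
        then show ?thesis using c1 c2 by simp
      next
        assume c2: "s = mx (Suc k2) \<and> y2 = mn k2"
        have "mn k1 = mx (Suc k2)" using c1 c2 by simp
        then show ?thesis using mnmx2 a1 k2(1) by blast
      qed
    next
      assume c1: "s = mx (Suc k1) \<and> y1 = mn k1"
      from k2(2) show ?thesis
      proof
        assume c2: "s = mn k2 \<and> y2 = mx (Suc k2)"
        have "mn k2 = mx (Suc k1)" using c1 c2 by simp
        then show ?thesis using mnmx2 a1 k1(1) by blast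
      next
        assume c2: "s = mx (Suc k2) \<and> y2 = mn k2"
        have "mx (Suc k1) = mx (Suc k2)" using c1 c2 by simp
        then have "Suc k1 = Suc k2" using mx_inj k1(1) k2(1) by blast
        then show ?thesis using c1 c2 by simp
      qed
    qed
  qed
  have Pex: "\<exists>y. P s y" if "s \<in> junctions S" for s
    using W4[OF that] unfolding P_def by blast
  have PJ: "y \<in> junctions S" if "P s y" for s y
    using that W5 W6 unfolding P_def by blast
  have Padj: "hasse_adj S s y" if "P s y" for s y
    using that W3 unfolding P_def hasse_adj_def by blast
  have Pne: "y \<noteq> s" if psy: "P s y" for s y
  proof -
    obtain k where k: "Suc k < t" "(s = mn k \<and> y = mx (Suc k)) \<or> (s = mx (Suc k) \<and> y = mn k)"
      using psy by (auto simp: P_def)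
    have "k < t" using k by simp
    then have "mn k \<noteq> mx (Suc k)" using mnmx2[of k "Suc k"] k(1) by blast
    then show ?thesis using k(2) by auto
  qed
  define f where "f s = (THE y. P s y)" for s
  have fEq: "f s = y" if py: "P s y" for s y
    unfolding f_def by (rule the_equality[where P="P s", OF py]) (rule Puniq[OF _ py])
  have fP: "P s (f s)" if sJ: "s \<in> junctions S" for s
  proof -
    obtain y where y: "P s y" using Pex[OF sJ] by blast
    then show ?thesis using fEq[OF y] by simp
  qed
  have fprops: "f s \<in> junctions S \<and> f s \<noteq> s \<and> f (f s) = s" if sJ: "s \<in> junctions S" for s
  proof -
    have p: "P s (f s)" using fP[OF sJ] .
    have "f (f s) = s" using fEq[OF Psym[OF p]] .
    then show ?thesis using PJ[OF p] Pne[OF p] by simp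
  qed
  show ?thesis
  proof
    fix C assume "C \<in> induced_components S (junctions S)"
    then obtain x where x: "x \<in> junctions S"
      and C: "C = {y \<in> junctions S. (\<lambda>a b. a \<in> junctions S \<and> b \<in> junctions S \<and> hasse_adj S a b)\<^sup>*\<^sup>* x y}"
      unfolding induced_components_def by blast
    have "junctions S \<subseteq> S" by (auto simp: junctions_def)
    then have finC: "finite C" using finS C by (auto intro: finite_subset)
    have "\<forall>y\<in>C. f y \<in> C \<and> f y \<noteq> y \<and> f (f y) = y"
    proof
      fix y assume yC: "y \<in> C"
      then have yJ: "y \<in> junctions S" using C by simp
      have fy: "f y \<in> junctions S" "f y \<noteq> y" "f (f y) = y" using fprops[OF yJ] by auto
      have "hasse_adj S y (f y)" using Padj[OF fP[OF yJ]] .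
      then have "(\<lambda>a b. a \<in> junctions S \<and> b \<in> junctions S \<and> hasse_adj S a b)\<^sup>*\<^sup>* x (f y)"
        using yC C yJ fy(1) by (auto intro: rtranclp.rtrancl_into_rtrancl)
      then show "f y \<in> C \<and> f y \<noteq> y \<and> f (f y) = y" using C fy by simp
    qed
    then show "even (card C)" using invol_even[OF finC] by blast
  qed
qed

theorem lemma12:
  fixes S :: "'a::order set"
  assumes "finite S"
    and "hasse_is_path S"
  shows "(is_chain_set S \<or> is_wattle S) \<longleftrightarrow>
         (\<forall>C \<in> induced_components S (junctions S). even (card C))"
proof -
  obtain v where v: "bij_betw v {0..<card S} S"
    and adjv: "\<forall>i<card S. \<forall>j<card S. hasse_adj S (v i) (v j) \<longleftrightarrow> (i = Suc j \<or> j = Suc i)"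
    using assms(2) unfolding hasse_is_path_def by blast
  interpret H: hpath S v "card S"
  proof
    show "finite S" by (rule assms(1))
    show "bij_betw v {0..<card S} S" by (rule v)
    fix i j assume "i < card S" "j < card S"
    then show "hasse_adj S (v i) (v j) \<longleftrightarrow> (i = Suc j \<or> j = Suc i)" using adjv by blast
  qed
  show ?thesis
  proof
    assume "is_chain_set S \<or> is_wattle S"
    then show "\<forall>C \<in> induced_components S (junctions S). even (card C)"
    proof
      assume "is_chain_set S"
      then have "junctions S = {}" using chain_nojunc assms(1) by blast
      then show ?thesis by (simp add: induced_components_def)
    next
      assume "is_wattle S"
      then show ?thesis using wattle_even assms(1) by blast
    qed
  next
    assume "\<forall>C \<in> induced_components S (junctions S). even (card C)"
    then show "is_chain_set S \<or> is_wattle S" by (rule H.main_rev)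
  qed
qed

end
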